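(* Let $\mathcal{E}$ be an equivalence class of words under $\sim$. Then (i) all words in $\mathcal{E}$ have the same length, and (ii) $\mathcal{E}$ is finite.
   Context: $\mathcal{A}$ is the free associative $\mathbb{C}$-algebra on noncommuting generators $L,R$; words are finite products of these letters. A word is balanced if it contains equally many $L$'s and $R$'s. $\mathcal{J}$ is the two-sided ideal generated by $\{FG-GF : F,G \text{ nonempty balanced words}\}$, and for words $X,Y$, $X\sim Y$ means $X-Y\in\mathcal{J}$. *)

theory Defs
  imports Complex_Main "HOL-Library.Poly_Mapping"
begin

datatype letter = L | R

type_synonym word = "letter list"

definition balanced :: "word \<Rightarrow> bool" where
  "balanced w \<longleftrightarrow> length (filter (\<lambda>c. c = L) w) = length (filter (\<lambda>c. c = R) w)"

text \<open>The free associative C-algebra on L, R: finitely supported C-valued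
  functions on words (a word X is the basis element mono X), with the
  concatenation (convolution) product.\<close>
type_synonym falg = "word \<Rightarrow>\<^sub>0 complex"

definition mono :: "word \<Rightarrow> falg" where
  "mono w = Poly_Mapping.single w 1"

definition fmult :: "falg \<Rightarrow> falg \<Rightarrow> falg" where
  "fmult p q = (\<Sum>u\<in>Poly_Mapping.keys p. \<Sum>v\<in>Poly_Mapping.keys q.
      Poly_Mapping.single (u @ v) (Poly_Mapping.lookup p u * Poly_Mapping.lookup q v))"

inductive_set Jideal :: "falg set" where
  gen: "\<lbrakk>balanced F; balanced G; F \<noteq> []; G \<noteq> []\<rbrakk>
        \<Longrightarrow> mono (F @ G) - mono (G @ F) \<in> Jideal"
| zero: "0 \<in> Jideal"
| add: "\<lbrakk>a \<in> Jideal; b \<in> Jideal\<rbrakk> \<Longrightarrow> a + b \<in> Jideal"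
| lmult: "a \<in> Jideal \<Longrightarrow> fmult x a \<in> Jideal"
| rmult: "a \<in> Jideal \<Longrightarrow> fmult a x \<in> Jideal"

definition wsim :: "word \<Rightarrow> word \<Rightarrow> bool" where
  "wsim X Y \<longleftrightarrow> mono X - mono Y \<in> Jideal"

end

theory Submission
  imports Defs
begin

definition ev :: "falg \<Rightarrow> complex" where
  "ev p = (\<Sum>u\<in>Poly_Mapping.keys p. Poly_Mapping.lookup p u * 2 ^ length u)"

lemma ev_superset:
  assumes "finite S" "Poly_Mapping.keys p \<subseteq> S"
  shows "ev p = (\<Sum>u\<in>S. Poly_Mapping.lookup p u * 2 ^ length u)"
  unfolding ev_def
  by (rule sum.mono_neutral_left) (use assms in \<open>auto simp: in_keys_iff\<close>)

lemma ev_add: "ev (p + q) = ev p + ev q"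
proof -
  let ?S = "Poly_Mapping.keys p \<union> Poly_Mapping.keys q"
  have f: "finite ?S" by simp
  have "ev (p+q) = (\<Sum>u\<in>?S. Poly_Mapping.lookup (p+q) u * 2 ^ length u)"
    by (rule ev_superset[OF f]) (simp add: keys_add)
  also have "\<dots> = (\<Sum>u\<in>?S. Poly_Mapping.lookup p u * 2 ^ length u)
     + (\<Sum>u\<in>?S. Poly_Mapping.lookup q u * 2 ^ length u)"
    by (simp add: lookup_add distrib_right sum.distrib)
  also have "\<dots> = ev p + ev q"
    using ev_superset[OF f, of p] ev_superset[OF f, of q] by auto
  finally show ?thesis .
qed

lemma ev_zero: "ev 0 = 0" by (simp add: ev_def)

lemma ev_sum: "ev (\<Sum>i\<in>I. f i) = (\<Sum>i\<in>I. ev (f i))"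
  by (induction I rule: infinite_finite_induct) (auto simp: ev_zero ev_add)

lemma ev_single: "ev (Poly_Mapping.single w c) = c * 2 ^ length w"
  by (cases "c = 0") (simp_all add: ev_def)

lemma ev_diff: "ev (p - q) = ev p - ev q"
  using ev_add[of "p - q" q] by simp

lemma ev_fmult: "ev (fmult p q) = ev p * ev q"
proof -
  have "ev (fmult p q) = (\<Sum>u\<in>Poly_Mapping.keys p. \<Sum>v\<in>Poly_Mapping.keys q.
      (Poly_Mapping.lookup p u * Poly_Mapping.lookup q v) * 2 ^ length (u @ v))"
    unfolding fmult_def by (simp only: ev_sum ev_single)
  also have "\<dots> = (\<Sum>u\<in>Poly_Mapping.keys p. \<Sum>v\<in>Poly_Mapping.keys q.
      (Poly_Mapping.lookup p u * 2 ^ length u) * (Poly_Mapping.lookup q v * 2 ^ length v))"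
    by (intro sum.cong refl) (simp add: power_add)
  also have "\<dots> = ev p * ev q"
    unfolding ev_def by (simp only: sum_product)
  finally show ?thesis .
qed

lemma ev_J: "a \<in> Jideal \<Longrightarrow> ev a = 0"
  by (induction rule: Jideal.induct)
     (auto simp: ev_diff ev_add ev_zero ev_fmult mono_def ev_single add.commute)

lemma wsim_len: "wsim X Y \<Longrightarrow> length Y = length X"
proof -
  assume "wsim X Y"
  then have "ev (mono X - mono Y) = 0" unfolding wsim_def by (rule ev_J)
  then have "(2::complex) ^ length X = 2 ^ length Y"
    by (simp add: ev_diff mono_def ev_single)
  then have "norm ((2::complex) ^ length X) = norm ((2::complex) ^ length Y)" by simp
  then have "(2::real) ^ length X = 2 ^ length Y" by (simp only: norm_power) simp
  then show ?thesis by simp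
qed

lemma finite_len: "finite {Y :: word. length Y = n}"
proof -
  have sub: "{Y :: word. length Y = n} \<subseteq> {Y. set Y \<subseteq> UNIV \<and> length Y = n}" by auto
  have fin: "finite (UNIV :: letter set)"
  proof -
    have eq: "(UNIV :: letter set) = {L, R}" using letter.exhaust by blast
    have "finite {L, R}" by (rule finite.insertI)+ (rule finite.emptyI)
    then show ?thesis by (simp only: eq)
  qed
  show ?thesis by (rule rev_finite_subset[OF finite_lists_length_eq[OF fin] sub])
qed

theorem corollary3p3:
  fixes X :: word and E :: "word set"
  assumes "E = {Y. wsim X Y}"
  shows "(\<forall>Y\<in>E. \<forall>Z\<in>E. length Y = length Z) \<and> finite E"
proof -
  have "E \<subseteq> {Y. length Y = length X}" using assms wsim_len by auto
  then have "finite E" by (rule rev_finite_subset[OF finite_len])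
  moreover have "\<forall>Y\<in>E. \<forall>Z\<in>E. length Y = length Z" using assms wsim_len by auto
  ultimately show ?thesis by blast
qed

end
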